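(* Let $G$ be a graph with a weak IASI $f$, let $e=uv$ be an edge of $G$, and let $G'$ be the graph obtained by subdividing $e$, i.e. replacing $e$ by a new vertex $w$ and edges $uw$, $wv$. Let $f'$ be the induced labeling of $G'$ which agrees with $f$ on $V(G)$ and assigns to $w$ the set $f^+(e)$. Then $G'$ admits this induced weak IASI (i.e. $f'$ is a weak IASI of $G'$) if and only if $e$ is mono-indexed under $f$.
   Context: Let $\mathbb{N}_0$ be the set of non-negative integers; for $A,B\subseteq\mathbb{N}_0$, $A+B=\{a+b:a\in A,b\in B\}$. An integer additive set-indexer (IASI) of a graph $G$ is an injective map $f:V(G)\to\mathcal{P}(\mathbb{N}_0)$ such that $f^+:E(G)\to\mathcal{P}(\mathbb{N}_0)$, $f^+(uv)=f(u)+f(v)$, is injective. A weak IASI is an IASI with $|f^+(uv)|=\max(|f(u)|,|f(v)|)$ for every edge $uv$. A vertex $v$ (resp. edge $e$) is mono-indexed if $|f(v)|=1$ (resp. $|f^+(e)|=1$).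
   Formalization: The induced labeling f' is assumed to be an IASI of G' (injective on vertices and on edge sums), and every label f(v) is a finite non-empty set. Each condition added here is assumed in the paper as well or is needed for the statement above to hold. *)

theory Defs
  imports Main
begin

definition sumset :: "nat set \<Rightarrow> nat set \<Rightarrow> nat set" where
  "sumset A B = {a + b | a b. a \<in> A \<and> b \<in> B}"

definition graph :: "'a set \<Rightarrow> 'a set set \<Rightarrow> bool" where
  "graph V E \<longleftrightarrow> finite V \<and>
     (\<forall>e\<in>E. \<exists>x y. x \<in> V \<and> y \<in> V \<and> x \<noteq> y \<and> e = {x, y})"

definition iasi :: "'a set \<Rightarrow> 'a set set \<Rightarrow> ('a \<Rightarrow> nat set) \<Rightarrow> bool" where
  "iasi V E f \<longleftrightarrow> inj_on f V \<and>
     (\<forall>x y x' y'. {x, y} \<in> E \<longrightarrow> {x', y'} \<in> E \<longrightarrow>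
        sumset (f x) (f y) = sumset (f x') (f y') \<longrightarrow> {x, y} = {x', y'})"

definition weak_iasi :: "'a set \<Rightarrow> 'a set set \<Rightarrow> ('a \<Rightarrow> nat set) \<Rightarrow> bool" where
  "weak_iasi V E f \<longleftrightarrow> iasi V E f \<and>
     (\<forall>x y. {x, y} \<in> E \<longrightarrow>
        card (sumset (f x) (f y)) = max (card (f x)) (card (f y)))"

definition mono_indexed_edge :: "('a \<Rightarrow> nat set) \<Rightarrow> 'a \<Rightarrow> 'a \<Rightarrow> bool" where
  "mono_indexed_edge f x y \<longleftrightarrow> card (sumset (f x) (f y)) = 1"

definition subdiv_vertices :: "'a set \<Rightarrow> 'a \<Rightarrow> 'a set" where
  "subdiv_vertices V w = insert w V"

definition subdiv_edges :: "'a set set \<Rightarrow> 'a \<Rightarrow> 'a \<Rightarrow> 'a \<Rightarrow> 'a set set" where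
  "subdiv_edges E u v w = insert {u, w} (insert {w, v} (E - {{u, v}}))"

definition subdiv_label :: "('a \<Rightarrow> nat set) \<Rightarrow> 'a \<Rightarrow> 'a \<Rightarrow> 'a \<Rightarrow> 'a \<Rightarrow> nat set" where
  "subdiv_label f u v w = f(w := sumset (f u) (f v))"

end

theory Submission
  imports Defs
begin

lemma sumset_finite: "finite A \<Longrightarrow> finite B \<Longrightarrow> finite (sumset A B)"
proof -
  assume "finite A" "finite B"
  have "sumset A B = (\<lambda>(a,b). a+b) ` (A \<times> B)" unfolding sumset_def by auto
  thus ?thesis using \<open>finite A\<close> \<open>finite B\<close> by simp
qed

lemma sumset_comm: "sumset A B = sumset B A"
  unfolding sumset_def by (auto simp: add.commute; metis add.commute)

lemma sumset_big:
  assumes "finite A" "finite B" "B \<noteq> {}" "x \<in> A" "y \<in> A" "x < y"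
  shows "card B < card (sumset A B)"
proof -
  have sub: "insert (y + Max B) ((+) x ` B) \<subseteq> sumset A B"
    using assms Max_in[of B] unfolding sumset_def by blast
  have nin: "y + Max B \<notin> (+) x ` B"
    using assms Max_ge[of B] by fastforce
  have "card (insert (y + Max B) ((+) x ` B)) = card B + 1"
    using nin assms by (simp add: card_image)
  moreover have "card (insert (y + Max B) ((+) x ` B)) \<le> card (sumset A B)"
    using sub sumset_finite[OF assms(1,2)] card_mono by blast
  ultimately show ?thesis by simp
qed

lemma card1_or_two:
  fixes A :: "nat set"
  assumes "finite A" "A \<noteq> {}" "card A \<noteq> 1"
  shows "\<exists>x y. x \<in> A \<and> y \<in> A \<and> x < y"
proof -
  have "\<not> card A \<le> Suc 0" using assms by (simp add: le_Suc_eq)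
  then obtain x y where "x \<in> A" "y \<in> A" "x \<noteq> y"
    using card_le_Suc0_iff_eq[OF assms(1)] by blast
  thus ?thesis by (metis linorder_neq_iff)
qed

theorem theorem2p20:
  fixes V :: "'a set" and E :: "'a set set" and f :: "'a \<Rightarrow> nat set"
    and u v w :: 'a
  assumes "graph V E"
    and "weak_iasi V E f"
    and "\<forall>x\<in>V. finite (f x) \<and> f x \<noteq> {}"
    and "{u, v} \<in> E"
    and "w \<notin> V"
    and "iasi (subdiv_vertices V w) (subdiv_edges E u v w) (subdiv_label f u v w)"
  shows "weak_iasi (subdiv_vertices V w) (subdiv_edges E u v w) (subdiv_label f u v w)
         \<longleftrightarrow> mono_indexed_edge f u v"
proof -
  let ?S = "sumset (f u) (f v)"
  let ?g = "subdiv_label f u v w"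
  obtain x0 y0 where xy0: "x0 \<in> V" "y0 \<in> V" "x0 \<noteq> y0" "{u,v} = {x0,y0}"
    using assms(1,4) unfolding graph_def by blast
  have uv: "u \<in> V" "v \<in> V" "u \<noteq> v"
    using xy0 by (auto simp: doubleton_eq_iff)
  have wu: "w \<noteq> u" "w \<noteq> v" using uv assms(5) by auto
  have fu: "finite (f u)" "f u \<noteq> {}" and fv: "finite (f v)" "f v \<noteq> {}"
    using assms(3) uv by auto
  have Sfin: "finite ?S" using sumset_finite fu fv by blast
  have Sne: "?S \<noteq> {}" using fu fv unfolding sumset_def by auto
  have wk: "\<And>x y. {x,y} \<in> E \<Longrightarrow> card (sumset (f x) (f y)) = max (card (f x)) (card (f y))"
    using assms(2) unfolding weak_iasi_def by blast
  have cS: "card ?S = max (card (f u)) (card (f v))" using wk assms(4) by blast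
  have gw: "?g w = ?S" and gu: "?g u = f u" and gv: "?g v = f v"
    using wu unfolding subdiv_label_def by auto
  show ?thesis
  proof
    assume W: "weak_iasi (subdiv_vertices V w) (subdiv_edges E u v w) ?g"
    have e1: "{u,w} \<in> subdiv_edges E u v w" "{w,v} \<in> subdiv_edges E u v w"
      unfolding subdiv_edges_def by auto
    have c1: "card (sumset (f u) ?S) = max (card (f u)) (card ?S)"
      using W e1(1) gw gu unfolding weak_iasi_def by metis
    have c2: "card (sumset ?S (f v)) = max (card ?S) (card (f v))"
      using W e1(2) gw gv unfolding weak_iasi_def by metis
    have a1: "card (f u) = 1"
    proof (rule ccontr)
      assume "card (f u) \<noteq> 1"
      then obtain x y where "x \<in> f u" "y \<in> f u" "x < y" using card1_or_two fu by blast
      hence "card ?S < card (sumset (f u) ?S)" using sumset_big fu Sfin Sne by blast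
      thus False using c1 cS by simp
    qed
    have b1: "card (f v) = 1"
    proof (rule ccontr)
      assume "card (f v) \<noteq> 1"
      then obtain x y where "x \<in> f v" "y \<in> f v" "x < y" using card1_or_two fv by blast
      hence "card ?S < card (sumset (f v) ?S)" using sumset_big fv Sfin Sne by blast
      moreover have "sumset (f v) ?S = sumset ?S (f v)" by (rule sumset_comm)
      ultimately show False using c2 cS by (simp add: max_def split: if_splits)
    qed
    show "mono_indexed_edge f u v" unfolding mono_indexed_edge_def using cS a1 b1 by simp
  next
    assume M: "mono_indexed_edge f u v"
    have "card (f u) \<noteq> 0" "card (f v) \<noteq> 0" using fu fv by auto
    hence a1: "card (f u) = 1" and b1: "card (f v) = 1"
      using M cS unfolding mono_indexed_edge_def
      by (auto simp: max_def split: if_splits)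
    obtain p where p: "f u = {p}" using a1 card_1_singletonE by blast
    obtain q where q: "f v = {q}" using b1 card_1_singletonE by blast
    have S: "?S = {p+q}" unfolding sumset_def p q by auto
    have ss: "\<And>a b. sumset {a} {b} = {a+b}" unfolding sumset_def by auto
    have "\<forall>x y. {x, y} \<in> subdiv_edges E u v w \<longrightarrow>
        card (sumset (?g x) (?g y)) = max (card (?g x)) (card (?g y))"
    proof (intro allI impI)
      fix x y assume xy: "{x, y} \<in> subdiv_edges E u v w"
      show "card (sumset (?g x) (?g y)) = max (card (?g x)) (card (?g y))"
      proof (cases "{x,y} \<in> E - {{u,v}}")
        case True
        then obtain x1 y1 where "x1 \<in> V" "y1 \<in> V" "{x,y} = {x1,y1}"
          using assms(1) unfolding graph_def by blast
        hence "x \<in> V" "y \<in> V" by (auto simp: doubleton_eq_iff)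
        hence "x \<noteq> w" "y \<noteq> w" using assms(5) by auto
        hence "?g x = f x" "?g y = f y" unfolding subdiv_label_def by auto
        thus ?thesis using wk True by auto
      next
        case False
        hence "{x,y} = {u,w} \<or> {x,y} = {w,v}" using xy unfolding subdiv_edges_def by auto
        hence "(x = u \<and> y = w) \<or> (x = w \<and> y = u) \<or> (x = w \<and> y = v) \<or> (x = v \<and> y = w)"
          by (auto simp: doubleton_eq_iff)
        thus ?thesis using gw gu gv S p q ss by auto
      qed
    qed
    thus "weak_iasi (subdiv_vertices V w) (subdiv_edges E u v w) ?g"
      using assms(6) unfolding weak_iasi_def by blast
  qed
qed

end
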